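(* In classical propositional logic over a set $X$ of propositional variables, let $X',X''$ be a disjoint cover of $X$, and let $\Sigma\subseteq\Pi X$ be a set of models which is definable by a (possibly infinite) theory, i.e. $\Sigma=M(T)$ for some set $T$ of formulas. Then $\Gamma:=\Sigma\upharpoonright X'\times\Pi X''$ (the set of models $\sigma$ such that some $\tau\in\Sigma$ agrees with $\sigma$ on $X'$) is also definable by a theory.
   Context: Models are identified with sequences: $\Pi X$ is the set of all assignments $X\to\{\mathrm{TRUE},\mathrm{FALSE}\}$; $M(T)$ is the set of models of $T$; $\Sigma\upharpoonright X'$ is the set of restrictions to $X'$ of elements of $\Sigma$. *)

theory Defs
  imports Main
begin

datatype 'v form = Var 'v | FFalse | FTrue | Neg "'v form"
  | Conj "'v form" "'v form" | Disj "'v form" "'v form" | Imp "'v form" "'v form"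

fun vars :: "'v form \<Rightarrow> 'v set" where
  "vars (Var v) = {v}"
| "vars FFalse = {}"
| "vars FTrue = {}"
| "vars (Neg p) = vars p"
| "vars (Conj p q) = vars p \<union> vars q"
| "vars (Disj p q) = vars p \<union> vars q"
| "vars (Imp p q) = vars p \<union> vars q"

fun eval :: "('v \<Rightarrow> bool) \<Rightarrow> 'v form \<Rightarrow> bool" where
  "eval m (Var v) = m v"
| "eval m FFalse = False"
| "eval m FTrue = True"
| "eval m (Neg p) = (\<not> eval m p)"
| "eval m (Conj p q) = (eval m p \<and> eval m q)"
| "eval m (Disj p q) = (eval m p \<or> eval m q)"
| "eval m (Imp p q) = (eval m p \<longrightarrow> eval m q)"

definition formulas :: "'v set \<Rightarrow> 'v form set" where
  "formulas X = {\<phi>. vars \<phi> \<subseteq> X}"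

text \<open>\<Pi>X: all assignments X \<rightarrow> {TRUE,FALSE}, represented canonically as total
  functions that are False outside X.\<close>
definition PiX :: "'v set \<Rightarrow> ('v \<Rightarrow> bool) set" where
  "PiX X = {m. \<forall>v. v \<notin> X \<longrightarrow> m v = False}"

definition models :: "'v set \<Rightarrow> 'v form set \<Rightarrow> ('v \<Rightarrow> bool) set" where
  "models X T = {m \<in> PiX X. \<forall>\<phi>\<in>T. eval m \<phi>}"

definition restr :: "('v \<Rightarrow> bool) \<Rightarrow> 'v set \<Rightarrow> ('v \<Rightarrow> bool)" where
  "restr m X' = (\<lambda>v. v \<in> X' \<and> m v)"

definition restr_set :: "('v \<Rightarrow> bool) set \<Rightarrow> 'v set \<Rightarrow> ('v \<Rightarrow> bool) set" where
  "restr_set S X' = (\<lambda>m. restr m X') ` S"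

text \<open>A \<times> B for A \<subseteq> \<Pi>X', B \<subseteq> \<Pi>X'' with X', X'' disjoint, identified with
  the set of assignments on X' \<union> X'' whose restrictions lie in A and B.\<close>
definition prod_set :: "('v \<Rightarrow> bool) set \<Rightarrow> 'v set \<Rightarrow> ('v \<Rightarrow> bool) set \<Rightarrow> 'v set
    \<Rightarrow> ('v \<Rightarrow> bool) set" where
  "prod_set A X' B X'' = {m \<in> PiX (X' \<union> X''). restr m X' \<in> A \<and> restr m X'' \<in> B}"

end

theory Submission
  imports Defs "HOL-Analysis.Analysis"
begin

abbreviation Top :: "('v \<Rightarrow> bool) topology" where
  "Top \<equiv> product_topology (\<lambda>_. discrete_topology (UNIV::bool set)) UNIV"

lemma open_eval: "openin Top {m. eval m \<phi>} \<and> openin Top {m. \<not> eval m \<phi>}"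
proof (induction \<phi>)
  case (Var v)
  have c: "continuous_map Top (discrete_topology (UNIV::bool set)) (\<lambda>x. x v)"
    by (rule continuous_map_product_projection) simp
  have "openin Top {x \<in> topspace Top. x v \<in> {True}}"
    by (rule openin_continuous_map_preimage[OF c]) simp
  moreover have "openin Top {x \<in> topspace Top. x v \<in> {False}}"
    by (rule openin_continuous_map_preimage[OF c]) simp
  ultimately show ?case by simp
next
  case (Conj p q)
  have "{m. eval m (Conj p q)} = {m. eval m p} \<inter> {m. eval m q}"
       "{m. \<not> eval m (Conj p q)} = {m. \<not> eval m p} \<union> {m. \<not> eval m q}" by auto
  then show ?case using Conj by (simp add: openin_Int openin_Un)
next
  case (Disj p q)
  have "{m. eval m (Disj p q)} = {m. eval m p} \<union> {m. eval m q}"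
       "{m. \<not> eval m (Disj p q)} = {m. \<not> eval m p} \<inter> {m. \<not> eval m q}" by auto
  then show ?case using Disj by (simp add: openin_Int openin_Un)
next
  case (Imp p q)
  have "{m. eval m (Imp p q)} = {m. \<not> eval m p} \<union> {m. eval m q}"
       "{m. \<not> eval m (Imp p q)} = {m. eval m p} \<inter> {m. \<not> eval m q}" by auto
  then show ?case using Imp by (simp add: openin_Int openin_Un)
next
  case FFalse
  have "topspace Top = UNIV" by simp
  then have "openin Top UNIV" by (metis openin_topspace)
  then show ?case by simp
next
  case FTrue
  have "topspace Top = UNIV" by simp
  then have "openin Top UNIV" by (metis openin_topspace)
  then show ?case by simp
qed auto

lemma closed_eval: "closedin Top {m. eval m \<phi>}"
proof -
  have "topspace Top - {m. eval m \<phi>} = {m. \<not> eval m \<phi>}" by auto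
  then show ?thesis using open_eval[of \<phi>] by (simp add: closedin_def)
qed

lemma compactness:
  assumes "\<And>F. finite F \<Longrightarrow> F \<subseteq> S \<Longrightarrow> \<exists>m. \<forall>\<phi>\<in>F. eval m \<phi>"
  shows "\<exists>m. \<forall>\<phi>\<in>S. eval m \<phi>"
proof -
  have cs: "compact_space Top"
    by (simp add: compact_space_product_topology compact_space_discrete_topology)
  let ?U = "(\<lambda>\<phi>. {m. eval m \<phi>}) ` S"
  have "\<Inter>?U \<noteq> {}"
  proof (rule cs[unfolded compact_space_fip, rule_format], intro conjI)
    show "\<forall>C\<in>?U. closedin Top C" using closed_eval by blast
    show "\<forall>\<F>. finite \<F> \<and> \<F> \<subseteq> ?U \<longrightarrow> \<Inter>\<F> \<noteq> {}"
    proof (intro allI impI)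
      fix \<F> assume h: "finite \<F> \<and> \<F> \<subseteq> ?U"
      then obtain F where F: "F \<subseteq> S" "finite F" "\<F> = (\<lambda>\<phi>. {m. eval m \<phi>}) ` F"
        by (meson finite_subset_image)
      then obtain m where "\<forall>\<phi>\<in>F. eval m \<phi>" using assms by blast
      then have "m \<in> \<Inter>\<F>" using F by auto
      then show "\<Inter>\<F> \<noteq> {}" by blast
    qed
  qed
  then show ?thesis by auto
qed

lemma eval_agree: "(\<And>v. v \<in> vars \<phi> \<Longrightarrow> m v = m' v) \<Longrightarrow> eval m \<phi> = eval m' \<phi>"
  by (induction \<phi>) auto

fun conjs :: "'v form list \<Rightarrow> 'v form" where
  "conjs [] = FTrue"
| "conjs (a # l) = Conj a (conjs l)"

lemma eval_conjs: "eval m (conjs l) = (\<forall>x\<in>set l. eval m x)"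
  by (induction l) auto

lemma vars_conjs: "vars (conjs l) = (\<Union>x\<in>set l. vars x)"
  by (induction l) auto

definition lit :: "('v \<Rightarrow> bool) \<Rightarrow> 'v \<Rightarrow> 'v form" where
  "lit m v = (if m v then Var v else Neg (Var v))"

lemma eval_lit: "eval t (lit m v) = (t v = m v)"
  by (simp add: lit_def)

lemma vars_lit: "vars (lit m v) = {v}"
  by (simp add: lit_def)

theorem corollary3p3:
  fixes X X' X'' :: "'v set" and \<Sigma> :: "('v \<Rightarrow> bool) set" and T :: "'v form set"
  assumes "X' \<inter> X'' = {}" and "X' \<union> X'' = X"
    and "T \<subseteq> formulas X" and "\<Sigma> = models X T"
  shows "\<exists>T'. T' \<subseteq> formulas X \<and>
           prod_set (restr_set \<Sigma> X') X' (PiX X'') X'' = models X T'"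
proof -
  define T' where "T' = {\<phi> \<in> formulas X'. \<forall>\<tau>\<in>\<Sigma>. eval \<tau> \<phi>}"
  have "T' \<subseteq> formulas X" using assms(2) by (auto simp: T'_def formulas_def)
  moreover have "prod_set (restr_set \<Sigma> X') X' (PiX X'') X'' = models X T'"
  proof
    show "prod_set (restr_set \<Sigma> X') X' (PiX X'') X'' \<subseteq> models X T'"
    proof
      fix m assume "m \<in> prod_set (restr_set \<Sigma> X') X' (PiX X'') X''"
      then have m: "m \<in> PiX X" and "restr m X' \<in> restr_set \<Sigma> X'"
        using assms(2) by (auto simp: prod_set_def)
      then obtain \<tau> where t: "\<tau> \<in> \<Sigma>" "restr m X' = restr \<tau> X'"
        by (auto simp: restr_set_def)
      have ag: "\<And>v. v \<in> X' \<Longrightarrow> m v = \<tau> v"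
        using t(2) unfolding restr_def by metis
      have "\<forall>\<phi>\<in>T'. eval m \<phi>"
      proof
        fix \<phi> assume p: "\<phi> \<in> T'"
        then have "eval \<tau> \<phi>" "vars \<phi> \<subseteq> X'" using t(1) by (auto simp: T'_def formulas_def)
        then show "eval m \<phi>" using eval_agree[of \<phi> m \<tau>] ag by auto
      qed
      then show "m \<in> models X T'" using m by (simp add: models_def)
    qed
  next
    show "models X T' \<subseteq> prod_set (restr_set \<Sigma> X') X' (PiX X'') X''"
    proof
      fix m assume mm: "m \<in> models X T'"
      then have m: "m \<in> PiX X" and mT: "\<forall>\<phi>\<in>T'. eval m \<phi>" by (auto simp: models_def)
      define S where "S = T \<union> lit m ` X' \<union> (\<lambda>v. Neg (Var v)) ` (- X)"
      have "\<exists>t. \<forall>\<phi>\<in>S. eval t \<phi>"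
      proof (rule compactness)
        fix F assume F: "finite F" "F \<subseteq> S"
        define V where "V = {v \<in> X'. lit m v \<in> F}"
        have fV: "finite V"
        proof -
          have "inj_on (lit m) V" by (auto simp: inj_on_def lit_def split: if_splits)
          moreover have "lit m ` V \<subseteq> F" by (auto simp: V_def)
          ultimately show ?thesis using F(1) finite_imageD finite_subset by metis
        qed
        then obtain vs where vs: "set vs = V" using finite_list by blast
        define \<psi> where "\<psi> = Neg (conjs (map (lit m) vs))"
        have "\<psi> \<in> formulas X'"
          by (auto simp: \<psi>_def formulas_def vars_conjs vars_lit vs V_def)
        moreover have "\<not> eval m \<psi>" by (simp add: \<psi>_def eval_conjs eval_lit)
        ultimately have "\<psi> \<notin> T'" using mT by blast
        with \<open>\<psi> \<in> formulas X'\<close> obtain \<tau> where t: "\<tau> \<in> \<Sigma>" "\<not> eval \<tau> \<psi>"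
          by (auto simp: T'_def)
        then have tl: "\<forall>v\<in>V. \<tau> v = m v" by (simp add: \<psi>_def eval_conjs eval_lit vs)
        from t(1) assms(4) have tP: "\<tau> \<in> PiX X" and tT: "\<forall>\<phi>\<in>T. eval \<tau> \<phi>"
          by (auto simp: models_def)
        have "\<forall>\<phi>\<in>F. eval \<tau> \<phi>"
        proof
          fix \<phi> assume p: "\<phi> \<in> F"
          then have "\<phi> \<in> S" using F by blast
          then consider "\<phi> \<in> T" | v where "v \<in> X'" "\<phi> = lit m v"
            | v where "v \<notin> X" "\<phi> = Neg (Var v)" unfolding S_def by blast
          then show "eval \<tau> \<phi>"
          proof cases
            case 1 then show ?thesis using tT by blast
          next
            case (2 v) then have "v \<in> V" using p by (simp add: V_def)
            then show ?thesis using 2 tl by (simp add: eval_lit)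
          next
            case (3 v) then show ?thesis using tP by (simp add: PiX_def)
          qed
        qed
        then show "\<exists>t. \<forall>\<phi>\<in>F. eval t \<phi>" by blast
      qed
      then obtain \<tau> where t: "\<forall>\<phi>\<in>S. eval \<tau> \<phi>" by blast
      have tP: "\<tau> \<in> PiX X"
      proof -
        have "\<forall>v. v \<notin> X \<longrightarrow> \<tau> v = False"
        proof (intro allI impI)
          fix v assume "v \<notin> X"
          then have "Neg (Var v) \<in> S" by (simp add: S_def)
          then show "\<tau> v = False" using t by fastforce
        qed
        then show ?thesis by (simp add: PiX_def)
      qed
      have "\<tau> \<in> \<Sigma>" using tP t assms(4) by (auto simp: models_def S_def)
      moreover have "\<forall>v\<in>X'. \<tau> v = m v"
      proof
        fix v assume "v \<in> X'"
        then have "lit m v \<in> S" by (simp add: S_def)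
        then show "\<tau> v = m v" using t eval_lit by metis
      qed
      then have "restr m X' = restr \<tau> X'" by (auto simp: restr_def)
      ultimately have "restr m X' \<in> restr_set \<Sigma> X'" by (auto simp: restr_set_def)
      moreover have "restr m X'' \<in> PiX X''" by (simp add: restr_def PiX_def)
      ultimately show "m \<in> prod_set (restr_set \<Sigma> X') X' (PiX X'') X''"
        using m assms(2) by (simp add: prod_set_def)
    qed
  qed
  ultimately show ?thesis by blast
qed

end
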